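(* Let $G$ be a topological group which is SIN, i.e. the identity of $G$ has a neighbourhood base consisting of open sets $V$ invariant under conjugation ($g^{-1}Vg=V$ for all $g\in G$). Let $(X,\mu)$ be a standard Lebesgue (probability) space. Then the topological group $L^0(X,\mu;G)$ is SIN as well.
   Context: For a topological group $G$ and a standard Lebesgue probability space $(X,\mu)$, $L^0(X,\mu;G)$ denotes the group of all $\mu$-a.e. equivalence classes of strongly (Bourbaki) measurable maps $f\colon X\to G$, i.e. maps such that for every $\varepsilon>0$ there is a compact $K\subseteq X$ with $\mu(K)>1-\varepsilon$ on which $f$ is continuous; the group operations are pointwise. It carries the topology of convergence in measure, a neighbourhood base at the identity being formed by the sets $[V,\varepsilon]=\{f\in L^0(X,\mu;G)\colon \mu\{x\in X\colon f(x)\in V\}>1-\varepsilon\}$, where $V$ runs over a neighbourhood base at the identity of $G$ and $\varepsilon>0$. *)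

theory Defs
  imports "HOL-Analysis.Analysis" "HOL-Probability.Probability"
begin

text \<open>Topological groups are modelled by the type class topological_group_add
  (group_add is NOT assumed commutative, so the group may be non-abelian;
  the group law is written additively: g^{-1} v g becomes -g + v + g).\<close>

definition SIN_group :: "'g::topological_group_add itself \<Rightarrow> bool" where
  "SIN_group _ \<longleftrightarrow>
     (\<forall>U::'g set. open U \<and> 0 \<in> U \<longrightarrow>
        (\<exists>V. open V \<and> 0 \<in> V \<and> V \<subseteq> U \<and> (\<forall>g. \<forall>v\<in>V. - g + v + g \<in> V)))"

text \<open>A standard Lebesgue probability space: a Polish space with a Borel
  probability measure (we measure sets in its completion).\<close>

definition std_prob_space :: "'x::polish_space measure \<Rightarrow> bool" where
  "std_prob_space \<mu> \<longleftrightarrow> prob_space \<mu> \<and> sets \<mu> = sets borel"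

text \<open>Strongly (Bourbaki) measurable maps; L^0 is represented by the set of
  representatives (the topology below does not distinguish a.e.-equal maps).\<close>

definition strongly_measurable :: "'x::polish_space measure \<Rightarrow> ('x \<Rightarrow> 'g::topological_space) \<Rightarrow> bool" where
  "strongly_measurable \<mu> f \<longleftrightarrow>
     (\<forall>\<epsilon>>0. \<exists>K. compact K \<and> measure \<mu> K > 1 - \<epsilon> \<and> continuous_on K f)"

definition L0 :: "'x::polish_space measure \<Rightarrow> ('x \<Rightarrow> 'g::topological_space) set" where
  "L0 \<mu> = {f. strongly_measurable \<mu> f}"

definition L0_nbhd :: "'x::polish_space measure \<Rightarrow> 'g::topological_group_add set \<Rightarrow> real \<Rightarrow> ('x \<Rightarrow> 'g) set" where
  "L0_nbhd \<mu> V \<epsilon> = {f \<in> L0 \<mu>. measure (completion \<mu>) {x \<in> space \<mu>. f x \<in> V} > 1 - \<epsilon>}"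

text \<open>Open sets of the topology of convergence in measure on L^0: sets W such that
  each f in W has a translated basic neighbourhood f[V,eps] inside W.\<close>

definition L0_open :: "'x::polish_space measure \<Rightarrow> ('x \<Rightarrow> 'g::topological_group_add) set \<Rightarrow> bool" where
  "L0_open \<mu> W \<longleftrightarrow> W \<subseteq> L0 \<mu> \<and>
     (\<forall>f\<in>W. \<exists>V \<epsilon>. open V \<and> 0 \<in> V \<and> \<epsilon> > 0 \<and>
        (\<lambda>h x. f x + h x) ` L0_nbhd \<mu> V \<epsilon> \<subseteq> W)"

text \<open>SIN for L^0: every neighbourhood of the identity (i.e. every superset of a
  basic [V,eps]) contains an open conjugation-invariant neighbourhood of the identity.\<close>

definition L0_SIN :: "'x::polish_space measure \<Rightarrow> 'g::topological_group_add itself \<Rightarrow> bool" where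
  "L0_SIN \<mu> _ \<longleftrightarrow>
     (\<forall>(V::'g set) \<epsilon>. open V \<and> 0 \<in> V \<and> \<epsilon> > 0 \<longrightarrow>
        (\<exists>W. L0_open \<mu> W \<and> (\<lambda>x. 0) \<in> W \<and> W \<subseteq> L0_nbhd \<mu> V \<epsilon> \<and>
             (\<forall>g\<in>L0 \<mu>. \<forall>f\<in>W. (\<lambda>x. - g x + f x + g x) \<in> W)))"

end

theory Submission
  imports Defs
begin

lemma std_space: "std_prob_space \<mu> \<Longrightarrow> space \<mu> = UNIV"
  unfolding std_prob_space_def by (metis sets_eq_imp_space_eq space_borel)

lemma std_prob: "std_prob_space \<mu> \<Longrightarrow> prob_space \<mu>"
  unfolding std_prob_space_def by simp

lemma compl_prob: "std_prob_space \<mu> \<Longrightarrow> prob_space (completion \<mu>)"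
  apply (rule prob_spaceI)
  using std_prob[THEN prob_space.emeasure_space_1] by simp

lemma tight:
  fixes \<mu> :: "'x::polish_space measure"
  assumes "std_prob_space \<mu>" "e > 0"
  shows "\<exists>K. compact K \<and> measure \<mu> K > 1 - e"
proof (cases "e > 1")
  case True
  then show ?thesis by (intro exI[of _ "{}"]) auto
next
  case False
  interpret prob_space \<mu> using std_prob[OF assms(1)] .
  have sb: "sets \<mu> = sets borel" using assms(1) unfolding std_prob_space_def by simp
  have "emeasure \<mu> UNIV = (SUP K \<in> {K. K \<subseteq> UNIV \<and> compact K}. emeasure \<mu> K)"
    by (rule inner_regular[OF sb]) auto
  moreover have "emeasure \<mu> UNIV = 1" using emeasure_space_1 std_space[OF assms(1)] by simp
  ultimately have "ennreal (1 - e) < (SUP K \<in> {K. K \<subseteq> UNIV \<and> compact K}. emeasure \<mu> K)"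
    using assms(2) False by (simp add: ennreal_lessI)
  then obtain K where K: "compact K" "ennreal (1 - e) < emeasure \<mu> K"
    by (auto simp: less_SUP_iff)
  then have "1 - e < measure \<mu> K"
    using False by (simp add: emeasure_eq_measure ennreal_less_iff)
  then show ?thesis using K by blast
qed

lemma sm_const:
  fixes \<mu> :: "'x::polish_space measure"
  assumes "std_prob_space \<mu>"
  shows "strongly_measurable \<mu> (\<lambda>x. c)"
  unfolding strongly_measurable_def using tight[OF assms] by (auto intro: continuous_on_const)

lemma meas_Int_ge:
  assumes "prob_space M" "A \<in> sets M" "B \<in> sets M"
  shows "measure M (A \<inter> B) \<ge> measure M A + measure M B - 1"
proof -
  interpret prob_space M by fact
  have "measure M (A \<union> B) \<le> 1" by simp
  moreover have "measure M (A \<union> B) = measure M A + measure M B - measure M (A \<inter> B)"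
    using assms by (intro measure_Un3) (auto simp: fmeasurable_def less_top[symmetric])
  ultimately show ?thesis by linarith
qed

lemma sm_add:
  fixes \<mu> :: "'x::polish_space measure" and f g :: "'x \<Rightarrow> 'g::topological_group_add"
  assumes "std_prob_space \<mu>" "strongly_measurable \<mu> f" "strongly_measurable \<mu> g"
  shows "strongly_measurable \<mu> (\<lambda>x. f x + g x)"
  unfolding strongly_measurable_def
proof (intro allI impI)
  fix e :: real assume e: "e > 0"
  interpret prob_space \<mu> using std_prob[OF assms(1)] .
  have sb: "sets \<mu> = sets borel" using assms(1) unfolding std_prob_space_def by simp
  obtain K1 where K1: "compact K1" "measure \<mu> K1 > 1 - e/2" "continuous_on K1 f"
    using assms(2) e unfolding strongly_measurable_def by (meson half_gt_zero)
  obtain K2 where K2: "compact K2" "measure \<mu> K2 > 1 - e/2" "continuous_on K2 g"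
    using assms(3) e unfolding strongly_measurable_def by (meson half_gt_zero)
  have m: "K1 \<in> sets \<mu>" "K2 \<in> sets \<mu>" using K1 K2 sb by (auto intro: borel_closed compact_imp_closed)
  have "measure \<mu> (K1 \<inter> K2) \<ge> measure \<mu> K1 + measure \<mu> K2 - 1"
    by (rule meas_Int_ge[OF std_prob[OF assms(1)] m])
  moreover have "continuous_on (K1 \<inter> K2) (\<lambda>x. f x + g x)"
    using K1 K2 by (intro continuous_on_add; meson continuous_on_subset inf_le1 inf_le2)
  ultimately show "\<exists>K. compact K \<and> 1 - e < measure \<mu> K \<and> continuous_on K (\<lambda>x. f x + g x)"
    using K1 K2 by (intro exI[of _ "K1 \<inter> K2"]) (auto intro: compact_Int)
qed

lemma sm_minus:
  fixes \<mu> :: "'x::polish_space measure" and f :: "'x \<Rightarrow> 'g::topological_group_add"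
  assumes "strongly_measurable \<mu> f"
  shows "strongly_measurable \<mu> (\<lambda>x. - f x)"
  using assms unfolding strongly_measurable_def by (metis continuous_on_minus continuous_on_id')

lemma sm_sets:
  fixes \<mu> :: "'x::polish_space measure" and f :: "'x \<Rightarrow> 'g::topological_group_add"
  assumes "std_prob_space \<mu>" "strongly_measurable \<mu> f" "open V"
  shows "{x \<in> space \<mu>. f x \<in> V} \<in> sets (completion \<mu>)"
proof -
  interpret prob_space \<mu> using std_prob[OF assms(1)] .
  have sb: "sets \<mu> = sets borel" using assms(1) unfolding std_prob_space_def by simp
  have sp: "space \<mu> = UNIV" using std_space[OF assms(1)] .
  have "\<forall>n. \<exists>K. compact K \<and> 1 - 1 / real (Suc n) < measure \<mu> K \<and> continuous_on K f"
    using assms(2) unfolding strongly_measurable_def by auto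
  then obtain K where K: "\<And>n. compact (K n)" "\<And>n. 1 - 1 / real (Suc n) < measure \<mu> (K n)"
    "\<And>n. continuous_on (K n) f" by metis
  have "\<forall>n. \<exists>T. open T \<and> T \<inter> K n = f -` V \<inter> K n"
    using K(3) assms(3) unfolding continuous_on_open_invariant by blast
  then obtain T where T: "\<And>n. open (T n)" "\<And>n. T n \<inter> K n = f -` V \<inter> K n" by metis
  have Ks: "\<And>n. K n \<in> sets \<mu>" using K(1) sb by (auto intro: borel_closed compact_imp_closed)
  define A where "A = (\<Union>n. T n \<inter> K n)"
  have A: "A \<in> sets \<mu>" unfolding A_def using T(1) Ks sb by (auto intro!: sets.countable_UN borel_open)
  define N where "N = UNIV - (\<Union>n. K n)"
  have N: "N \<in> sets \<mu>" unfolding N_def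
  proof -
    have "(\<Union>n. K n) \<in> sets \<mu>" using Ks by blast
    then show "UNIV - (\<Union>n. K n) \<in> sets \<mu>" using sp by (metis sets.compl_sets)
  qed
  have "\<And>n. measure \<mu> N \<le> 1 / real (Suc n)"
  proof -
    fix n
    have "space \<mu> - K n \<in> sets \<mu>" using Ks by (rule sets.compl_sets)
    then have "UNIV - K n \<in> sets \<mu>" using sp by simp
    then have "measure \<mu> N \<le> measure \<mu> (UNIV - K n)"
      unfolding N_def by (intro finite_measure_mono) auto
    also have "\<dots> = 1 - measure \<mu> (K n)" using prob_compl[OF Ks[of n]] sp by simp
    finally show "measure \<mu> N \<le> 1 / real (Suc n)" using K(2)[of n] by linarith
  qed
  have "measure \<mu> N \<le> 0"
  proof (rule ccontr)
    assume "\<not> measure \<mu> N \<le> 0"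
    then have "measure \<mu> N > 0" by simp
    then obtain n where "1 / real (Suc n) < measure \<mu> N" using nat_approx_posE by metis
    then show False using \<open>\<And>n. measure \<mu> N \<le> 1 / real (Suc n)\<close>[of n] by simp
  qed
  then have "N \<in> null_sets \<mu>" using N by (simp add: emeasure_eq_measure null_setsI measure_nonneg antisym)
  have eq: "{x \<in> space \<mu>. f x \<in> V} = A \<union> (f -` V \<inter> N)"
    using T(2) sp unfolding A_def N_def by blast
  show ?thesis
    by (rule sets_completionI[OF eq _ \<open>N \<in> null_sets \<mu>\<close> A]) auto
qed

lemma nbhd_add:
  fixes \<mu> :: "'x::polish_space measure" and h1 h2 :: "'x \<Rightarrow> 'g::topological_group_add"
  assumes std: "std_prob_space \<mu>" and h1: "h1 \<in> L0_nbhd \<mu> U d" and h2: "h2 \<in> L0_nbhd \<mu> U d"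
    and U: "open U" and V: "open V" and UV: "\<forall>a\<in>U. \<forall>b\<in>U. a + b \<in> V"
  shows "(\<lambda>x. h1 x + h2 x) \<in> L0_nbhd \<mu> V (2 * d)"
proof -
  interpret C: prob_space "completion \<mu>" using compl_prob[OF std] .
  have s1: "strongly_measurable \<mu> h1" "strongly_measurable \<mu> h2" using h1 h2 by (auto simp: L0_nbhd_def L0_def)
  have A: "{x \<in> space \<mu>. h1 x \<in> U} \<in> sets (completion \<mu>)" "{x \<in> space \<mu>. h2 x \<in> U} \<in> sets (completion \<mu>)"
    "{x \<in> space \<mu>. h1 x + h2 x \<in> V} \<in> sets (completion \<mu>)"
    using sm_sets[OF std s1(1) U] sm_sets[OF std s1(2) U] sm_sets[OF std sm_add[OF std s1] V] by auto
  have "measure (completion \<mu>) ({x \<in> space \<mu>. h1 x \<in> U} \<inter> {x \<in> space \<mu>. h2 x \<in> U})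
     \<ge> measure (completion \<mu>) {x \<in> space \<mu>. h1 x \<in> U} + measure (completion \<mu>) {x \<in> space \<mu>. h2 x \<in> U} - 1"
    by (rule meas_Int_ge[OF compl_prob[OF std] A(1,2)])
  moreover have "measure (completion \<mu>) ({x \<in> space \<mu>. h1 x \<in> U} \<inter> {x \<in> space \<mu>. h2 x \<in> U})
     \<le> measure (completion \<mu>) {x \<in> space \<mu>. h1 x + h2 x \<in> V}"
    using UV by (intro C.finite_measure_mono A(3)) auto
  ultimately show ?thesis using h1 h2 sm_add[OF std s1]
    by (auto simp: L0_nbhd_def L0_def)
qed

lemma nbhd_conj:
  fixes \<mu> :: "'x::polish_space measure" and k g :: "'x \<Rightarrow> 'g::topological_group_add"
  assumes std: "std_prob_space \<mu>" and k: "k \<in> L0_nbhd \<mu> V e" and g: "g \<in> L0 \<mu>"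
    and inv: "\<forall>g. \<forall>v\<in>V. - g + v + g \<in> V"
  shows "(\<lambda>x. - g x + k x + g x) \<in> L0_nbhd \<mu> V e"
proof -
  have eq: "{x \<in> space \<mu>. - g x + k x + g x \<in> V} = {x \<in> space \<mu>. k x \<in> V}"
  proof safe
    fix x assume "- g x + k x + g x \<in> V"
    then have "- (- g x) + (- g x + k x + g x) + (- g x) \<in> V" using inv by blast
    then show "k x \<in> V" by (simp add: add.assoc)
  next
    fix x assume "k x \<in> V" then show "- g x + k x + g x \<in> V" using inv by blast
  qed
  have "strongly_measurable \<mu> k" "strongly_measurable \<mu> g" using k g by (auto simp: L0_nbhd_def L0_def)
  then have "strongly_measurable \<mu> (\<lambda>x. - g x + k x + g x)"
    using std by (intro sm_add sm_minus) auto
  then show ?thesis using k eq by (auto simp: L0_nbhd_def L0_def)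
qed

lemma add_split:
  fixes V :: "'g::topological_group_add set"
  assumes "open V" "0 \<in> V"
  shows "\<exists>U. open U \<and> 0 \<in> U \<and> (\<forall>a\<in>U. \<forall>b\<in>U. a + b \<in> V)"
proof -
  have c: "continuous_on UNIV (\<lambda>p::'g \<times> 'g. fst p + snd p)"
    by (intro continuous_on_add continuous_on_fst continuous_on_snd continuous_on_id)
  have "open ((\<lambda>p::'g \<times> 'g. fst p + snd p) -` V)"
    using c assms(1) by (metis continuous_on_open_vimage open_UNIV Int_UNIV_right)
  moreover have "(0, 0) \<in> (\<lambda>p::'g \<times> 'g. fst p + snd p) -` V" using assms(2) by simp
  ultimately obtain A B where AB: "open A" "open B" "(0,0) \<in> A \<times> B" "A \<times> B \<subseteq> (\<lambda>p::'g \<times> 'g. fst p + snd p) -` V"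
    by (rule open_prod_elim)
  have "\<forall>a\<in>A \<inter> B. \<forall>b\<in>A \<inter> B. a + b \<in> V"
  proof (intro ballI)
    fix a b assume "a \<in> A \<inter> B" "b \<in> A \<inter> B"
    then have "(a, b) \<in> A \<times> B" by blast
    then have "(a, b) \<in> (\<lambda>p::'g \<times> 'g. fst p + snd p) -` V" by (rule subsetD[OF AB(4)])
    then show "a + b \<in> V" by simp
  qed
  moreover have "open (A \<inter> B)" using AB(1,2) by (rule open_Int)
  moreover have "0 \<in> A \<inter> B" using AB(3) by (simp add: mem_Times_iff)
  ultimately show ?thesis by blast
qed

theorem lemma1:
  fixes \<mu> :: "'x::polish_space measure"
  assumes "SIN_group TYPE('g::topological_group_add)"
    and "std_prob_space \<mu>"
  shows "L0_SIN \<mu> TYPE('g)"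
  unfolding L0_SIN_def
proof (intro allI impI)
  fix V :: "'g set" and eps :: real
  assume Ve: "open V \<and> 0 \<in> V \<and> eps > 0"
  note std = assms(2)
  have SIN0: "\<forall>U::'g set. open U \<and> 0 \<in> U \<longrightarrow> (\<exists>V. open V \<and> 0 \<in> V \<and> V \<subseteq> U \<and> (\<forall>g. \<forall>v\<in>V. - g + v + g \<in> V))"
    using assms(1) unfolding SIN_group_def .
  have SIN: "\<exists>V. open V \<and> 0 \<in> V \<and> V \<subseteq> U \<and> (\<forall>g. \<forall>v\<in>V. - g + v + g \<in> V)"
    if "open U" "0 \<in> U" for U :: "'g set"
    using SIN0 that by simp
  have ex: "\<exists>V1. open V1 \<and> 0 \<in> V1 \<and> V1 \<subseteq> V \<and> (\<forall>g. \<forall>v\<in>V1. - g + v + g \<in> V1)"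
    by (rule SIN) (use Ve in simp_all)
  obtain V1 where V1c: "open V1 \<and> 0 \<in> V1 \<and> V1 \<subseteq> V \<and> (\<forall>g. \<forall>v\<in>V1. - g + v + g \<in> V1)"
    using ex by (rule exE)
  from V1c have V1: "open V1" "0 \<in> V1" "V1 \<subseteq> V" "\<forall>g. \<forall>v\<in>V1. - g + v + g \<in> V1"
    by simp_all
  define W where "W = {f \<in> L0 \<mu>. \<exists>V2 e2. open V2 \<and> 0 \<in> V2 \<and> (\<forall>g. \<forall>v\<in>V2. - g + v + g \<in> V2) \<and> e2 > 0 \<and>
      (\<lambda>h x. f x + h x) ` L0_nbhd \<mu> V2 e2 \<subseteq> L0_nbhd \<mu> V1 eps}"
  have zL0: "(\<lambda>x. 0::'g) \<in> L0 \<mu>" using sm_const[OF std] by (simp add: L0_def)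
  have zn: "(\<lambda>x. 0::'g) \<in> L0_nbhd \<mu> V2 e2" if "0 \<in> V2" "e2 > 0" for V2 :: "'g set" and e2 :: real
  proof -
    interpret C: prob_space "completion \<mu>" using compl_prob[OF std] .
    have "{x \<in> space \<mu>. (0::'g) \<in> V2} = space (completion \<mu>)" using that by simp
    then show ?thesis using zL0 that prob_space.prob_space[OF std_prob[OF std]] by (simp add: L0_nbhd_def)
  qed
  have mono: "L0_nbhd \<mu> V1 eps \<subseteq> L0_nbhd \<mu> V eps"
  proof
    fix f assume f: "f \<in> L0_nbhd \<mu> V1 eps"
    interpret C: prob_space "completion \<mu>" using compl_prob[OF std] .
    have "strongly_measurable \<mu> f" using f by (simp add: L0_nbhd_def L0_def)
    then have "{x \<in> space \<mu>. f x \<in> V} \<in> sets (completion \<mu>)" using sm_sets[OF std] Ve by blast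
    then have "measure (completion \<mu>) {x \<in> space \<mu>. f x \<in> V1} \<le> measure (completion \<mu>) {x \<in> space \<mu>. f x \<in> V}"
      using V1(3) by (intro C.finite_measure_mono) auto
    then show "f \<in> L0_nbhd \<mu> V eps" using f by (auto simp: L0_nbhd_def)
  qed
  show "\<exists>W. L0_open \<mu> W \<and> (\<lambda>x. 0) \<in> W \<and> W \<subseteq> L0_nbhd \<mu> V eps \<and>
             (\<forall>g\<in>L0 \<mu>. \<forall>f\<in>W. (\<lambda>x. - g x + f x + g x) \<in> W)"
  proof (intro exI[of _ W] conjI ballI)
    show "(\<lambda>x. 0) \<in> W" unfolding W_def using zL0 V1 Ve by (intro CollectI conjI exI[of _ V1] exI[of _ eps]) auto
  next
    show "W \<subseteq> L0_nbhd \<mu> V eps"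
    proof
      fix f assume "f \<in> W"
      then obtain V2 e2 where V2: "open V2" "0 \<in> V2" "e2 > 0" "(\<lambda>h x. f x + h x) ` L0_nbhd \<mu> V2 e2 \<subseteq> L0_nbhd \<mu> V1 eps"
        unfolding W_def by blast
      have "(\<lambda>x. f x + 0) \<in> L0_nbhd \<mu> V1 eps" using V2(4) zn[OF V2(2,3)] by blast
      then show "f \<in> L0_nbhd \<mu> V eps" using mono by auto
    qed
  next
    show "L0_open \<mu> W" unfolding L0_open_def
    proof (intro conjI ballI)
      show "W \<subseteq> L0 \<mu>" unfolding W_def by blast
    next
      fix f assume "f \<in> W"
      then obtain V2 e2 where fL: "f \<in> L0 \<mu>" and V2: "open V2" "0 \<in> V2" "e2 > 0" "(\<lambda>h x. f x + h x) ` L0_nbhd \<mu> V2 e2 \<subseteq> L0_nbhd \<mu> V1 eps"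
        unfolding W_def by blast
      obtain U0 where U0: "open U0" "0 \<in> U0" "\<forall>a\<in>U0. \<forall>b\<in>U0. a + b \<in> V2" using add_split[OF V2(1,2)] by blast
      obtain U where U: "open U" "0 \<in> U" "U \<subseteq> U0" "\<forall>g. \<forall>v\<in>U. - g + v + g \<in> U" using SIN[OF U0(1,2)] by blast
      have UV: "\<forall>a\<in>U. \<forall>b\<in>U. a + b \<in> V2" using U0(3) U(3) by blast
      show "\<exists>V' \<epsilon>. open V' \<and> 0 \<in> V' \<and> \<epsilon> > 0 \<and> (\<lambda>h x. f x + h x) ` L0_nbhd \<mu> V' \<epsilon> \<subseteq> W"
      proof (intro exI[of _ U] exI[of _ "e2/2"] conjI)
        show "(\<lambda>h x. f x + h x) ` L0_nbhd \<mu> U (e2/2) \<subseteq> W"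
        proof safe
          fix h assume h: "h \<in> L0_nbhd \<mu> U (e2/2)"
          have fh: "(\<lambda>x. f x + h x) \<in> L0 \<mu>" using fL h sm_add[OF std] by (auto simp: L0_def L0_nbhd_def)
          have "(\<lambda>h' x. f x + h x + h' x) ` L0_nbhd \<mu> U (e2/2) \<subseteq> L0_nbhd \<mu> V1 eps"
          proof safe
            fix h' assume h': "h' \<in> L0_nbhd \<mu> U (e2/2)"
            have "(\<lambda>x. h x + h' x) \<in> L0_nbhd \<mu> V2 (2 * (e2/2))"
              by (rule nbhd_add[OF std h h' U(1) V2(1) UV])
            then have "(\<lambda>x. f x + (h x + h' x)) \<in> L0_nbhd \<mu> V1 eps" using V2(4) by auto
            then show "(\<lambda>x. f x + h x + h' x) \<in> L0_nbhd \<mu> V1 eps" by (simp add: add.assoc)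
          qed
          then show "(\<lambda>x. f x + h x) \<in> W" unfolding W_def using fh U V2(3)
            by (intro CollectI conjI exI[of _ U] exI[of _ "e2/2"]) auto
        qed
      qed (use U V2 in auto)
    qed
  next
    fix g f :: "'x \<Rightarrow> 'g" assume g: "g \<in> L0 \<mu>" and "f \<in> W"
    then obtain V2 e2 where fL: "f \<in> L0 \<mu>" and V2: "open V2" "0 \<in> V2" "\<forall>g. \<forall>v\<in>V2. - g + v + g \<in> V2" "e2 > 0"
      "(\<lambda>h x. f x + h x) ` L0_nbhd \<mu> V2 e2 \<subseteq> L0_nbhd \<mu> V1 eps"
      unfolding W_def by blast
    have gs: "strongly_measurable \<mu> g" "strongly_measurable \<mu> f" using g fL by (auto simp: L0_def)
    have cL: "(\<lambda>x. - g x + f x + g x) \<in> L0 \<mu>" using gs std by (auto simp: L0_def intro!: sm_add sm_minus)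
    have ng: "(\<lambda>x. - g x) \<in> L0 \<mu>" using gs by (auto simp: L0_def intro!: sm_minus)
    have "(\<lambda>h x. - g x + f x + g x + h x) ` L0_nbhd \<mu> V2 e2 \<subseteq> L0_nbhd \<mu> V1 eps"
    proof safe
      fix h assume h: "h \<in> L0_nbhd \<mu> V2 e2"
      have "(\<lambda>x. - (- g x) + h x + - g x) \<in> L0_nbhd \<mu> V2 e2"
        by (rule nbhd_conj[OF std h ng V2(3)])
      then have "(\<lambda>x. f x + (g x + h x + - g x)) \<in> L0_nbhd \<mu> V1 eps" using V2(5) by auto
      then have "(\<lambda>x. - g x + (f x + (g x + h x + - g x)) + g x) \<in> L0_nbhd \<mu> V1 eps"
        by (rule nbhd_conj[OF std _ g V1(4)])
      then show "(\<lambda>x. - g x + f x + g x + h x) \<in> L0_nbhd \<mu> V1 eps" by (simp add: add.assoc)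
    qed
    then show "(\<lambda>x. - g x + f x + g x) \<in> W" unfolding W_def using cL V2
      by (intro CollectI conjI exI[of _ V2] exI[of _ e2]) auto
  qed
qed

end
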